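(* Let $\mathcal{X}=\{\{\mathbf{x}^{(\mathbf{n},m)}\in\mathbb{R}^D\}_{\mathbf{n}\in[N]^P}\}_{m=1}^M$ and let $\bar{\mathcal{K}}\subseteq[N]^P$ have size divisible by $2^P$. Then there exists a complete undirected weighted graph with vertex set $\bar{\mathcal{K}}$ and edge weights $w$ such that for every partition of $\bar{\mathcal{K}}$ into $2^P$ equally sized disjoint sets $\{\mathcal{K}_{\mathbf{k}}\}_{\mathbf{k}\in[2]^P}$, the weight of the induced $2^P$-cut, $\frac12\sum_{\mathbf{k}\in[2]^P}\sum_{\mathbf{n}\in\mathcal{K}_{\mathbf{k}},\,\mathbf{n}'\in\bar{\mathcal{K}}\setminus\mathcal{K}_{\mathbf{k}}}w(\{\mathbf{n},\mathbf{n}'\})$, is equal, up to multiplicative and additive constants independent of the partition, to $\frac1{2^P}\sum_{\mathbf{k}\in[2]^P}\mathrm{SE}(\mathcal{X};\mathcal{K}_{\mathbf{k}})$. Consequently, minimizing $\frac1{2^P}\sum_{\mathbf{k}}\mathrm{SE}(\mathcal{X};\mathcal{K}_{\mathbf{k}})$ over such balanced partitions is a minimum balanced $2^P$-cut problem over a complete graph with $|\bar{\mathcal{K}}|$ vertices.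
   Context: For the instance set $\mathcal{X}$ and features $\mathbf{n},\mathbf{n}'\in[N]^P$, let $\mu^{(\mathbf{n})}=\frac1M\sum_m\mathbf{x}^{(\mathbf{n},m)}$, $\Sigma^{(\mathbf{n})}=\frac1M\sum_m(\mathbf{x}^{(\mathbf{n},m)}-\mu^{(\mathbf{n})})\otimes(\mathbf{x}^{(\mathbf{n},m)}-\mu^{(\mathbf{n})})$, $\Sigma^{(\mathbf{n},\mathbf{n}')}=\frac1M\sum_m(\mathbf{x}^{(\mathbf{n},m)}-\mu^{(\mathbf{n})})\otimes(\mathbf{x}^{(\mathbf{n}',m)}-\mu^{(\mathbf{n}')})$, and the multivariate Pearson correlation $p_{\mathbf{n},\mathbf{n}'}:=\mathrm{tr}(\Sigma^{(\mathbf{n},\mathbf{n}')})/\mathrm{tr}((\Sigma^{(\mathbf{n})}\Sigma^{(\mathbf{n}')})^{1/2})$. For $\mathcal{K}\subseteq[N]^P$, the surrogate entanglement is $\mathrm{SE}(\mathcal{X};\mathcal{K}):=\sum_{\mathbf{n}\in\mathcal{K},\,\mathbf{n}'\in[N]^P\setminus\mathcal{K}}p_{\mathbf{n},\mathbf{n}'}$. *)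

theory Defs
  imports "HOL-Analysis.Analysis"
begin

text \<open>Features n in [N]^P are functions {..<P} -> {..<N} (extensional, PiE);
  the 2^P part indices k in [2]^P are functions {..<P} -> {..<2}.
  The data x n m is the instance x^(n,m) in R^D (D = CARD('d)), m ranges over {..<M}.\<close>

definition feats :: "nat \<Rightarrow> nat \<Rightarrow> (nat \<Rightarrow> nat) set" where
  "feats N P = PiE {..<P} (\<lambda>_. {..<N})"

definition outer :: "real^'d \<Rightarrow> real^'d \<Rightarrow> real^'d^'d" where
  "outer u v = (\<chi> i j. u $ i * v $ j)"

definition mean_vec :: "nat \<Rightarrow> ('f \<Rightarrow> nat \<Rightarrow> real^'d) \<Rightarrow> 'f \<Rightarrow> real^'d" where
  "mean_vec M x n = (1 / real M) *\<^sub>R (\<Sum>m<M. x n m)"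

definition cross_cov :: "nat \<Rightarrow> ('f \<Rightarrow> nat \<Rightarrow> real^'d) \<Rightarrow> 'f \<Rightarrow> 'f \<Rightarrow> real^'d^'d" where
  "cross_cov M x n n' = (1 / real M) *\<^sub>R
     (\<Sum>m<M. outer (x n m - mean_vec M x n) (x n' m - mean_vec M x n'))"

definition cov :: "nat \<Rightarrow> ('f \<Rightarrow> nat \<Rightarrow> real^'d) \<Rightarrow> 'f \<Rightarrow> real^'d^'d" where
  "cov M x n = cross_cov M x n n"

definition psd :: "real^'d^'d \<Rightarrow> bool" where
  "psd S \<longleftrightarrow> transpose S = S \<and> (\<forall>v. 0 \<le> v \<bullet> (S *v v))"

definition psd_sqrt :: "real^'d^'d \<Rightarrow> real^'d^'d" where
  "psd_sqrt A = (THE S. psd S \<and> S ** S = A)"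

text \<open>tr((A B)^(1/2)) for PSD A, B, via the standard convention
  tr((A B)^(1/2)) = tr((A^(1/2) B A^(1/2))^(1/2)).\<close>
definition tr_sqrt_prod :: "real^'d^'d \<Rightarrow> real^'d^'d \<Rightarrow> real" where
  "tr_sqrt_prod A B = trace (psd_sqrt (psd_sqrt A ** B ** psd_sqrt A))"

definition pearson :: "nat \<Rightarrow> ('f \<Rightarrow> nat \<Rightarrow> real^'d) \<Rightarrow> 'f \<Rightarrow> 'f \<Rightarrow> real" where
  "pearson M x n n' = trace (cross_cov M x n n') / tr_sqrt_prod (cov M x n) (cov M x n')"

definition SE :: "nat \<Rightarrow> nat \<Rightarrow> nat \<Rightarrow> ((nat \<Rightarrow> nat) \<Rightarrow> nat \<Rightarrow> real^'d)
                    \<Rightarrow> (nat \<Rightarrow> nat) set \<Rightarrow> real" where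
  "SE N P M x K = (\<Sum>n\<in>K. \<Sum>n'\<in>feats N P - K. pearson M x n n')"

definition balanced_partition ::
  "nat \<Rightarrow> (nat \<Rightarrow> nat) set \<Rightarrow> ((nat \<Rightarrow> nat) \<Rightarrow> (nat \<Rightarrow> nat) set) \<Rightarrow> bool" where
  "balanced_partition P Kbar Kp \<longleftrightarrow>
     (\<Union>k\<in>feats 2 P. Kp k) = Kbar \<and>
     (\<forall>k\<in>feats 2 P. \<forall>k'\<in>feats 2 P. k \<noteq> k' \<longrightarrow> Kp k \<inter> Kp k' = {}) \<and>
     (\<forall>k\<in>feats 2 P. card (Kp k) = card Kbar div 2 ^ P)"

definition cut_weight ::
  "nat \<Rightarrow> (nat \<Rightarrow> nat) set \<Rightarrow> ((nat \<Rightarrow> nat) set \<Rightarrow> real)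
     \<Rightarrow> ((nat \<Rightarrow> nat) \<Rightarrow> (nat \<Rightarrow> nat) set) \<Rightarrow> real" where
  "cut_weight P Kbar w Kp = (1/2) * (\<Sum>k\<in>feats 2 P. \<Sum>n\<in>Kp k. \<Sum>n'\<in>Kbar - Kp k. w {n, n'})"

end

theory Submission
  imports Defs
begin

lemma finite_feats: "finite (feats N P)"
  unfolding feats_def by (simp add: finite_PiE)

lemma T_eq:
  fixes f :: "(nat \<Rightarrow> nat) \<Rightarrow> (nat \<Rightarrow> nat) \<Rightarrow> real"
  assumes fin: "finite Kbar" and finI: "finite I"
    and un: "(\<Union>k\<in>I. Kp k) = Kbar"
    and dis: "\<forall>k\<in>I. \<forall>k'\<in>I. k \<noteq> k' \<longrightarrow> Kp k \<inter> Kp k' = {}"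
  shows "(\<Sum>k\<in>I. \<Sum>n\<in>Kp k. \<Sum>n'\<in>Kbar - Kp k. f n n')
       = (\<Sum>n\<in>Kbar. \<Sum>n'\<in>Kbar. if (\<exists>k\<in>I. n \<in> Kp k \<and> n' \<in> Kp k) then 0 else f n n')"
proof -
  let ?h = "\<lambda>n. \<Sum>n'\<in>Kbar. if (\<exists>k\<in>I. n \<in> Kp k \<and> n' \<in> Kp k) then 0 else f n n'"
  have sub: "\<And>k. k \<in> I \<Longrightarrow> Kp k \<subseteq> Kbar" using un by blast
  have "(\<Sum>n\<in>Kbar. ?h n) = (\<Sum>k\<in>I. \<Sum>n\<in>Kp k. ?h n)"
    unfolding un[symmetric]
    by (rule sum.UNION_disjoint[OF finI]) (use fin sub finite_subset in metis, use dis in simp)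
  also have "\<dots> = (\<Sum>k\<in>I. \<Sum>n\<in>Kp k. \<Sum>n'\<in>Kbar - Kp k. f n n')"
  proof (rule sum.cong[OF refl], rule sum.cong[OF refl])
    fix k n assume k: "k \<in> I" and n: "n \<in> Kp k"
    have eq: "\<And>n'. (\<exists>k'\<in>I. n \<in> Kp k' \<and> n' \<in> Kp k') = (n' \<in> Kp k)"
    proof
      fix n' assume "\<exists>k'\<in>I. n \<in> Kp k' \<and> n' \<in> Kp k'"
      then obtain k' where k': "k' \<in> I" "n \<in> Kp k'" "n' \<in> Kp k'" by blast
      have "k' = k"
      proof (rule ccontr)
        assume "k' \<noteq> k"
        then have "Kp k \<inter> Kp k' = {}" using dis k k'(1) by blast
        then show False using n k'(2) by blast
      qed
      then show "n' \<in> Kp k" using k' by simp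
    next
      fix n' assume "n' \<in> Kp k" then show "\<exists>k'\<in>I. n \<in> Kp k' \<and> n' \<in> Kp k'" using k n by blast
    qed
    have "?h n = (\<Sum>n'\<in>Kbar. if n' \<in> Kp k then 0 else f n n')"
      by (simp add: eq)
    also have "\<dots> = (\<Sum>n'\<in>Kbar - Kp k. f n n')"
      using fin by (simp add: sum.If_cases Diff_eq)
    finally show "?h n = (\<Sum>n'\<in>Kbar - Kp k. f n n')" .
  qed
  finally show ?thesis by simp
qed

lemma T_swap:
  fixes f :: "(nat \<Rightarrow> nat) \<Rightarrow> (nat \<Rightarrow> nat) \<Rightarrow> real"
  shows "(\<Sum>n\<in>Kbar. \<Sum>n'\<in>Kbar. if (\<exists>k\<in>I. n \<in> Kp k \<and> n' \<in> Kp k) then 0 else f n' n)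
       = (\<Sum>n\<in>Kbar. \<Sum>n'\<in>Kbar. if (\<exists>k\<in>I. n \<in> Kp k \<and> n' \<in> Kp k) then 0 else f n n')"
  apply (subst sum.swap)
  apply (rule sum.cong[OF refl], rule sum.cong[OF refl])
  apply (rule if_cong)
  by blast+

theorem proposition5:
  fixes N P M :: nat and x :: "(nat \<Rightarrow> nat) \<Rightarrow> nat \<Rightarrow> real^'d"
    and Kbar :: "(nat \<Rightarrow> nat) set"
  assumes "Kbar \<subseteq> feats N P" and "(2::nat) ^ P dvd card Kbar"
  shows "\<exists>(w :: (nat \<Rightarrow> nat) set \<Rightarrow> real) (a::real) (b::real). a > 0 \<and>
           (\<forall>Kp. balanced_partition P Kbar Kp \<longrightarrow>
              cut_weight P Kbar w Kp
                = a * ((1 / 2 ^ P) * (\<Sum>k\<in>feats 2 P. SE N P M x (Kp k))) + b)"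
proof -
  define p where "p = pearson M x"
  define w where "w = (\<lambda>e::(nat\<Rightarrow>nat) set. \<Sum>a\<in>e. \<Sum>b\<in>e-{a}. p a b)"
  define C where "C = (\<Sum>n\<in>Kbar. \<Sum>n'\<in>feats N P - Kbar. p n n')"
  have fin: "finite Kbar" using assms(1) finite_feats finite_subset by blast
  have finI: "finite (feats 2 P)" by (rule finite_feats)
  show ?thesis
  proof (intro exI conjI allI impI)
    show "(2::real) ^ P > 0" by simp
    fix Kp assume bp: "balanced_partition P Kbar Kp"
    let ?I = "feats 2 P"
    have un: "(\<Union>k\<in>?I. Kp k) = Kbar"
      and dis: "\<forall>k\<in>?I. \<forall>k'\<in>?I. k \<noteq> k' \<longrightarrow> Kp k \<inter> Kp k' = {}"
      using bp unfolding balanced_partition_def by auto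
    have sub: "\<And>k. k \<in> ?I \<Longrightarrow> Kp k \<subseteq> Kbar" using un by blast
    define T where "T = (\<lambda>f::(nat \<Rightarrow> nat) \<Rightarrow> (nat \<Rightarrow> nat) \<Rightarrow> real.
        \<Sum>k\<in>?I. \<Sum>n\<in>Kp k. \<Sum>n'\<in>Kbar - Kp k. f n n')"
    have Tsw: "T (\<lambda>n n'. p n' n) = T p"
      unfolding T_def
      using T_eq[OF fin finI un dis, of "\<lambda>n n'. p n' n"] T_eq[OF fin finI un dis, of p]
        T_swap[where Kbar=Kbar and I="?I" and Kp=Kp and f=p] by simp
    have Tadd: "T (\<lambda>n n'. p n n' + p n' n) = T p + T (\<lambda>n n'. p n' n)"
      unfolding T_def by (simp add: sum.distrib)
    have cut: "cut_weight P Kbar w Kp = (1/2) * T (\<lambda>n n'. p n n' + p n' n)"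
      unfolding cut_weight_def T_def
    proof (rule arg_cong[where f="\<lambda>t. (1/2) * t"], intro sum.cong refl)
      fix k n n' assume "k \<in> ?I" "n \<in> Kp k" "n' \<in> Kbar - Kp k"
      then have "n \<noteq> n'" by auto
      then show "w {n, n'} = p n n' + p n' n"
        unfolding w_def by (simp add: insert_Diff_if)
    qed
    have SEsum: "(\<Sum>k\<in>?I. SE N P M x (Kp k)) = C + T p"
    proof -
      have "(\<Sum>k\<in>?I. SE N P M x (Kp k))
          = (\<Sum>k\<in>?I. \<Sum>n\<in>Kp k. \<Sum>n'\<in>feats N P - Kp k. p n n')"
        unfolding SE_def p_def by simp
      also have "\<dots> = (\<Sum>k\<in>?I. \<Sum>n\<in>Kp k. (\<Sum>n'\<in>feats N P - Kbar. p n n') + (\<Sum>n'\<in>Kbar - Kp k. p n n'))"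
      proof (intro sum.cong refl)
        fix k n assume k: "k \<in> ?I" and "n \<in> Kp k"
        have "feats N P - Kp k = (feats N P - Kbar) \<union> (Kbar - Kp k)"
          using sub[OF k] assms(1) by blast
        moreover have "(\<Sum>n'\<in>(feats N P - Kbar) \<union> (Kbar - Kp k). p n n') =
              (\<Sum>n'\<in>feats N P - Kbar. p n n') + (\<Sum>n'\<in>Kbar - Kp k. p n n')"
          by (rule sum.union_disjoint[OF finite_Diff[OF finite_feats] finite_Diff[OF fin]]) blast
        ultimately show "(\<Sum>n'\<in>feats N P - Kp k. p n n') =
              (\<Sum>n'\<in>feats N P - Kbar. p n n') + (\<Sum>n'\<in>Kbar - Kp k. p n n')"
          by simp
      qed
      also have "\<dots> = (\<Sum>k\<in>?I. \<Sum>n\<in>Kp k. \<Sum>n'\<in>feats N P - Kbar. p n n') + T p"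
        unfolding T_def by (simp add: sum.distrib)
      also have "(\<Sum>k\<in>?I. \<Sum>n\<in>Kp k. \<Sum>n'\<in>feats N P - Kbar. p n n') = C"
        unfolding C_def un[symmetric]
        by (rule sum.UNION_disjoint[OF finI, symmetric]) (use fin sub finite_subset in metis, use dis in simp)
      finally show ?thesis by simp
    qed
    show "cut_weight P Kbar w Kp
        = 2 ^ P * ((1 / 2 ^ P) * (\<Sum>k\<in>?I. SE N P M x (Kp k))) + (- C)"
      using cut Tadd Tsw SEsum by simp
  qed
qed

end
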